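(* Let $\ell_1$ and $\ell_2$ be log-scales on topological spaces $X_1$ and $X_2$, respectively. Suppose that $X_1$ is compact and that $\ell_2$ is positive. If $f:X_1\to X_2$ is locally Lipschitz, then $f$ is Lipschitz.
   Context: A log-scale on a set $X$ is a function $\ell:X\times X\to\mathbb{R}\cup\{\infty\}$ such that $\ell(x,y)=\ell(y,x)$, $\ell(x,y)=+\infty$ iff $x=y$, and for some $\delta\ge0$, $\ell(x,z)\ge\min(\ell(x,y),\ell(y,z))-\delta$ for all $x,y,z$. When a log-scale is given on a topological space, it is assumed that the topology it defines (i.e. the topology of a metric $|\cdot|$ satisfying $c^{-1}\alpha^{\ell(x,y)}\le |x-y|\le c\alpha^{\ell(x,y)}$ for some constants $0<\alpha<1$, $c>1$) coincides with the given topology. A log-scale is positive if all its values are positive. A map $f:X_1\to X_2$ is Lipschitz if there is $n>0$ with $\ell_2(f(x),f(y))\ge\ell_1(x,y)-n$ for all $x,y\in X_1$; it is locally Lipschitz if every $x\in X_1$ has a neighborhood $U$ such that $f|_U$ is Lipschitz. *)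

theory Defs
  imports "HOL-Analysis.Analysis"
begin

definition log_scale :: "'a topology \<Rightarrow> ('a \<Rightarrow> 'a \<Rightarrow> ereal) \<Rightarrow> bool" where
  "log_scale X l \<longleftrightarrow>
     (\<forall>x\<in>topspace X. \<forall>y\<in>topspace X. l x y = l y x \<and> l x y \<noteq> -\<infinity>
        \<and> (l x y = \<infinity> \<longleftrightarrow> x = y))
   \<and> (\<exists>\<delta>::real. \<delta> \<ge> 0 \<and> (\<forall>x\<in>topspace X. \<forall>y\<in>topspace X. \<forall>z\<in>topspace X.
        l x z \<ge> min (l x y) (l y z) - ereal \<delta>))"

text \<open>The log-scale defines the given topology: there is a metric d with
  c^-1 alpha^l \<le> d \<le> c alpha^l (alpha^infinity = 0) whose topology is X.\<close>
definition log_scale_compatible :: "'a topology \<Rightarrow> ('a \<Rightarrow> 'a \<Rightarrow> ereal) \<Rightarrow> bool" where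
  "log_scale_compatible X l \<longleftrightarrow>
     (\<exists>d \<alpha> (c::real). Metric_space (topspace X) d \<and> 0 < \<alpha> \<and> \<alpha> < 1 \<and> c > 1
        \<and> Metric_space.mtopology (topspace X) d = X
        \<and> (\<forall>x\<in>topspace X. \<forall>y\<in>topspace X. x \<noteq> y \<longrightarrow>
              inverse c * \<alpha> powr real_of_ereal (l x y) \<le> d x y
            \<and> d x y \<le> c * \<alpha> powr real_of_ereal (l x y)))"

definition log_scale_on :: "'a topology \<Rightarrow> ('a \<Rightarrow> 'a \<Rightarrow> ereal) \<Rightarrow> bool" where
  "log_scale_on X l \<longleftrightarrow> log_scale X l \<and> log_scale_compatible X l"

definition positive_log_scale :: "'a topology \<Rightarrow> ('a \<Rightarrow> 'a \<Rightarrow> ereal) \<Rightarrow> bool" where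
  "positive_log_scale X l \<longleftrightarrow> (\<forall>x\<in>topspace X. \<forall>y\<in>topspace X. l x y > 0)"

definition lipschitz_ls_on ::
  "'a set \<Rightarrow> ('a \<Rightarrow> 'a \<Rightarrow> ereal) \<Rightarrow> ('b \<Rightarrow> 'b \<Rightarrow> ereal) \<Rightarrow> ('a \<Rightarrow> 'b) \<Rightarrow> bool" where
  "lipschitz_ls_on U l1 l2 f \<longleftrightarrow>
     (\<exists>n::real. n > 0 \<and> (\<forall>x\<in>U. \<forall>y\<in>U. l2 (f x) (f y) \<ge> l1 x y - ereal n))"

definition locally_lipschitz_ls ::
  "'a topology \<Rightarrow> ('a \<Rightarrow> 'a \<Rightarrow> ereal) \<Rightarrow> ('b \<Rightarrow> 'b \<Rightarrow> ereal) \<Rightarrow> ('a \<Rightarrow> 'b) \<Rightarrow> bool" where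
  "locally_lipschitz_ls X1 l1 l2 f \<longleftrightarrow>
     (\<forall>x\<in>topspace X1. \<exists>U. openin X1 U \<and> x \<in> U \<and> lipschitz_ls_on U l1 l2 f)"

end

theory Submission
  imports Defs
begin

theorem lemma1p1p7:
  fixes X1 :: "'a topology" and X2 :: "'b topology"
    and l1 :: "'a \<Rightarrow> 'a \<Rightarrow> ereal" and l2 :: "'b \<Rightarrow> 'b \<Rightarrow> ereal"
    and f :: "'a \<Rightarrow> 'b"
  assumes "log_scale_on X1 l1" and "log_scale_on X2 l2"
    and "compact_space X1"
    and "positive_log_scale X2 l2"
    and "f \<in> topspace X1 \<rightarrow> topspace X2"
    and "locally_lipschitz_ls X1 l1 l2 f"
  shows "lipschitz_ls_on (topspace X1) l1 l2 f"
proof -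
  obtain d \<alpha> c where ms: "Metric_space (topspace X1) d" and a0: "0 < \<alpha>" and a1: "\<alpha> < 1"
    and c1: "(c::real) > 1" and top: "Metric_space.mtopology (topspace X1) d = X1"
    and bnd: "\<And>x y. x\<in>topspace X1 \<Longrightarrow> y\<in>topspace X1 \<Longrightarrow> x \<noteq> y \<Longrightarrow>
              d x y \<le> c * \<alpha> powr real_of_ereal (l1 x y)"
  proof -
    from assms(1) obtain d \<alpha> c where "Metric_space (topspace X1) d \<and> 0 < \<alpha> \<and> \<alpha> < 1 \<and> (c::real) > 1
        \<and> Metric_space.mtopology (topspace X1) d = X1
        \<and> (\<forall>x\<in>topspace X1. \<forall>y\<in>topspace X1. x \<noteq> y \<longrightarrow>
              inverse c * \<alpha> powr real_of_ereal (l1 x y) \<le> d x y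
            \<and> d x y \<le> c * \<alpha> powr real_of_ereal (l1 x y))"
      unfolding log_scale_on_def log_scale_compatible_def by blast
    then show ?thesis by (intro that[of d \<alpha> c]) auto
  qed
  have ls1: "log_scale X1 l1" and ls2: "log_scale X2 l2"
    using assms(1,2) by (auto simp: log_scale_on_def)
  have inf1: "\<And>x y. x\<in>topspace X1 \<Longrightarrow> y\<in>topspace X1 \<Longrightarrow> l1 x y = \<infinity> \<longleftrightarrow> x = y"
    and ninf1: "\<And>x y. x\<in>topspace X1 \<Longrightarrow> y\<in>topspace X1 \<Longrightarrow> l1 x y \<noteq> -\<infinity>"
    using ls1 unfolding log_scale_def by blast+
  have inf2: "\<And>x y. x\<in>topspace X2 \<Longrightarrow> y\<in>topspace X2 \<Longrightarrow> l2 x y = \<infinity> \<longleftrightarrow> x = y"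
    using ls2 unfolding log_scale_def by blast
  define C where "C = {U. openin X1 U \<and> lipschitz_ls_on U l1 l2 f}"
  have cov: "topspace X1 \<subseteq> \<Union>C"
    using assms(6) unfolding locally_lipschitz_ls_def C_def by blast
  obtain F where F: "finite F" "F \<subseteq> C" "topspace X1 \<subseteq> \<Union>F"
  proof -
    have "\<forall>U\<in>C. openin X1 U" by (auto simp: C_def)
    then have "\<exists>F. finite F \<and> F \<subseteq> C \<and> topspace X1 \<subseteq> \<Union>F"
      using assms(3) cov unfolding compact_space_def compactin_def by blast
    then show ?thesis using that by blast
  qed
  have "\<forall>U\<in>F. \<exists>n::real. n > 0 \<and> (\<forall>x\<in>U. \<forall>y\<in>U. l2 (f x) (f y) \<ge> l1 x y - ereal n)"
    using F(2) unfolding C_def lipschitz_ls_on_def by blast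
  then obtain N where N: "\<And>U. U\<in>F \<Longrightarrow> N U > 0 \<and> (\<forall>x\<in>U. \<forall>y\<in>U. l2 (f x) (f y) \<ge> l1 x y - ereal (N U))"
    by metis
  interpret M: Metric_space "topspace X1" d by (rule ms)
  have "\<exists>\<epsilon>>0. \<forall>x \<in> topspace X1. \<exists>U \<in> F. M.mball x \<epsilon> \<subseteq> U"
    apply (rule M.lebesgue_number)
    using assms(3) F top by (auto simp: compact_space_def C_def)
  then obtain \<epsilon> where e0: "\<epsilon> > 0" and leb: "\<And>x. x \<in> topspace X1 \<Longrightarrow> \<exists>U \<in> F. M.mball x \<epsilon> \<subseteq> U"
    by blast
  define L where "L = log \<alpha> (\<epsilon>/c) + 1"
  have Lp: "c * \<alpha> powr r < \<epsilon>" if "r \<ge> L" for r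
  proof -
    have "\<alpha> powr r \<le> \<alpha> powr L" using that a0 a1
      by (simp add: powr_mono')
    also have "\<dots> < \<alpha> powr (log \<alpha> (\<epsilon>/c))" unfolding L_def using a0 a1
      by (simp add: powr_less_mono')
    also have "\<dots> = \<epsilon>/c" using a0 a1 e0 c1 by simp
    finally show ?thesis using c1 by (simp add: field_simps)
  qed
  have S0: "0 \<le> (\<Sum>U\<in>F. N U)" using N by (intro sum_nonneg) (auto simp: less_imp_le)
  define n where "n = 1 + (\<Sum>U\<in>F. N U) + \<bar>L\<bar>"
  have NS: "N U \<le> (\<Sum>U\<in>F. N U)" if "U \<in> F" for U
    using F(1) that N by (intro member_le_sum) (auto simp: less_imp_le)
  show ?thesis
    unfolding lipschitz_ls_on_def
  proof (intro exI[of _ n] conjI ballI)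
    show "n > 0" unfolding n_def using S0 by simp
  next
    fix x y assume x: "x \<in> topspace X1" and y: "y \<in> topspace X1"
    have fx: "f x \<in> topspace X2" and fy: "f y \<in> topspace X2" using assms(5) x y by auto
    show "l2 (f x) (f y) \<ge> l1 x y - ereal n"
    proof (cases "x = y")
      case True
      then show ?thesis using inf2[OF fx fx] by simp
    next
      case False
      then obtain r where r: "l1 x y = ereal r" using ls1 x y unfolding log_scale_def
      proof -
        have "l1 x y \<noteq> \<infinity>" "l1 x y \<noteq> -\<infinity>" using inf1[OF x y] ninf1[OF x y] False by auto
        then show ?thesis using that by (cases "l1 x y") auto
      qed
      show ?thesis
      proof (cases "r \<ge> L")
        case True
        have "d x y < \<epsilon>" using bnd[OF x y False] Lp[OF True] r by simp
        then have yb: "y \<in> M.mball x \<epsilon>" using x y by simp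
        obtain U where U: "U \<in> F" "M.mball x \<epsilon> \<subseteq> U" using leb x by blast
        have xU: "x \<in> U" using U x e0 by auto
        have "l1 x y - ereal n \<le> l1 x y - ereal (N U)"
          using NS[OF U(1)] r unfolding n_def by simp
        also have "\<dots> \<le> l2 (f x) (f y)" using N[OF U(1)] xU yb U(2) by blast
        finally show ?thesis .
      next
        case False
        have "l1 x y - ereal n \<le> 0" using False r NS F(1) N unfolding n_def
          using S0 by simp
        also have "0 < l2 (f x) (f y)" using assms(4) fx fy unfolding positive_log_scale_def by blast
        finally show ?thesis by simp
      qed
    qed
  qed
qed

end
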